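(* $\log\mathrm{Time}(s)\in O(\mathrm{Space}(s))$; that is, there is a constant $c$ such that for every term $s$ that reduces to an abstraction in at least one step, $\log\mathrm{Time}(s)\le c\cdot\mathrm{Space}(s)$.
   Context: $\mathsf{L}$-terms (de Bruijn): $s::=n\mid st\mid\lambda s$, size $|n|=1+n$, $|\lambda s|=1+|s|$, $|st|=1+|s|+|t|$. Substitution $k^k_u=u$, $n^k_u=n$ ($n\ne k$), $(st)^k_u=(s^k_u)(t^k_u)$, $(\lambda s)^k_u=\lambda(s^{k+1}_u)$. Reduction (deterministic): $(\lambda s)(\lambda t)\succ s^0_{\lambda t}$; $s\succ s'\Rightarrow st\succ s't$; $t\succ t'\Rightarrow(\lambda s)t\succ(\lambda s)t'$. If $s=s_0\succ\cdots\succ s_j$ with $s_j$ an abstraction, then $\mathrm{Time}(s)=j$ and $\mathrm{Space}(s)=\max_i|s_i|$. *)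

theory Defs
  imports Complex_Main
begin

datatype lterm = Var nat | App lterm lterm | Lam lterm

fun tsize :: "lterm \<Rightarrow> nat" where
  "tsize (Var n) = 1 + n"
| "tsize (Lam s) = 1 + tsize s"
| "tsize (App s t) = 1 + tsize s + tsize t"

fun subst :: "lterm \<Rightarrow> nat \<Rightarrow> lterm \<Rightarrow> lterm" where
  "subst (Var n) k u = (if n = k then u else Var n)"
| "subst (App s t) k u = App (subst s k u) (subst t k u)"
| "subst (Lam s) k u = Lam (subst s (Suc k) u)"

inductive step :: "lterm \<Rightarrow> lterm \<Rightarrow> bool" where
  beta: "step (App (Lam s) (Lam t)) (subst s 0 (Lam t))"
| appL: "step s s' \<Longrightarrow> step (App s t) (App s' t)"
| appR: "step t t' \<Longrightarrow> step (App (Lam s) t) (App (Lam s) t')"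

fun is_abs :: "lterm \<Rightarrow> bool" where
  "is_abs (Lam _) = True"
| "is_abs _ = False"

definition reduces_in :: "lterm \<Rightarrow> nat \<Rightarrow> (nat \<Rightarrow> lterm) \<Rightarrow> bool" where
  "reduces_in s j f \<longleftrightarrow> f 0 = s \<and> (\<forall>i<j. step (f i) (f (Suc i))) \<and> is_abs (f j)"

text \<open>Time(s): the (unique, by determinism) length of such a sequence.\<close>
definition Time :: "lterm \<Rightarrow> nat" where
  "Time s = (THE j. \<exists>f. reduces_in s j f)"

definition Space :: "lterm \<Rightarrow> nat" where
  "Space s = (THE m. \<exists>f. reduces_in s (Time s) f \<and> m = (MAX i\<in>{..Time s}. tsize (f i)))"

end

theory Submission
  imports Defs
begin

lemma lam_nostep: "step (Lam s) x \<Longrightarrow> False"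
  by (cases rule: step.cases) auto

inductive_cases stepAppE: "step (App s t) c"

lemma step_det: "step a b \<Longrightarrow> step a c \<Longrightarrow> b = c"
proof (induction arbitrary: c rule: step.induct)
  case (beta s t)
  from beta.prems show ?case
  proof (rule stepAppE)
    fix s1 t1 assume "c = subst s1 0 (Lam t1)" "Lam s = Lam s1" "Lam t = Lam t1"
    then show ?thesis by simp
  next
    fix s' assume "step (Lam s) s'" then show ?thesis by (rule lam_nostep[THEN FalseE])
  next
    fix t' s1 assume "step (Lam t) t'" then show ?thesis by (rule lam_nostep[THEN FalseE])
  qed
next
  case (appL s s' t)
  from appL.prems show ?case
  proof (rule stepAppE)
    fix s1 t1 assume "s = Lam s1"
    then show ?thesis using appL.hyps lam_nostep by blast
  next
    fix s2 assume "c = App s2 t" "step s s2" then show ?thesis using appL.IH by blast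
  next
    fix t' s1 assume "s = Lam s1"
    then show ?thesis using appL.hyps lam_nostep by blast
  qed
next
  case (appR t t' s)
  from appR.prems show ?case
  proof (rule stepAppE)
    fix s1 t1 assume "t = Lam t1"
    then show ?thesis using appR.hyps lam_nostep by blast
  next
    fix s2 assume "step (Lam s) s2" then show ?thesis by (rule lam_nostep[THEN FalseE])
  next
    fix t2 s1 assume "Lam s = Lam s1" "c = App (Lam s1) t2" "step t t2"
    then show ?thesis using appR.IH by blast
  qed
qed

lemma abs_nostep: "is_abs x \<Longrightarrow> \<not> step x y"
  by (cases x) (auto elim: step.cases)

lemma agree:
  assumes "reduces_in s j f" "reduces_in s j' g" "i \<le> j" "i \<le> j'"
  shows "f i = g i"
  using assms(3,4)
proof (induction i)
  case 0 then show ?case using assms(1,2) by (simp add: reduces_in_def)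
next
  case (Suc i)
  then have "f i = g i" by simp
  moreover have "step (f i) (f (Suc i))" "step (g i) (g (Suc i))"
    using assms(1,2) Suc.prems by (auto simp: reduces_in_def)
  ultimately show ?case using step_det by metis
qed

lemma len_unique:
  assumes "reduces_in s j f" "reduces_in s j' g"
  shows "j = j'"
proof (rule ccontr)
  assume "j \<noteq> j'"
  then consider "j < j'" | "j' < j" by linarith
  then show False
  proof cases
    case 1
    have "f j = g j" using agree[OF assms] 1 by simp
    moreover have "step (g j) (g (Suc j))" using assms(2) 1 by (auto simp: reduces_in_def)
    ultimately show False using abs_nostep assms(1) by (metis reduces_in_def)
  next
    case 2
    have "f j' = g j'" using agree[OF assms] 2 by simp
    moreover have "step (f j') (f (Suc j'))" using assms(1) 2 by (auto simp: reduces_in_def)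
    ultimately show False using abs_nostep assms(2) by (metis reduces_in_def)
  qed
qed

lemma Time_eq: "reduces_in s j f \<Longrightarrow> Time s = j"
  unfolding Time_def using len_unique by blast

lemma Space_eq: "reduces_in s j f \<Longrightarrow> Space s = (MAX i\<in>{..j}. tsize (f i))"
  unfolding Space_def Time_eq
proof (rule the_equality)
  assume "reduces_in s j f"
  then show "\<exists>g. reduces_in s j g \<and> (MAX i\<in>{..j}. tsize (f i)) = (MAX i\<in>{..j}. tsize (g i))"
    by blast
next
  fix m assume r: "reduces_in s j f" and "\<exists>g. reduces_in s j g \<and> m = (MAX i\<in>{..j}. tsize (g i))"
  then obtain g where g: "reduces_in s j g" "m = (MAX i\<in>{..j}. tsize (g i))" by blast
  have "\<And>i. i \<in> {..j} \<Longrightarrow> tsize (g i) = tsize (f i)" using agree[OF r g(1)] by simp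
  then show "m = (MAX i\<in>{..j}. tsize (f i))" using g(2) by (metis (no_types, lifting) image_cong)
qed

lemma distinct_seq:
  assumes "reduces_in s j f" "a < b" "b \<le> j"
  shows "f a \<noteq> f b"
proof
  assume eq: "f a = f b"
  have "\<And>k. b + k \<le> j \<Longrightarrow> f (a + k) = f (b + k)"
  proof -
    fix k show "b + k \<le> j \<Longrightarrow> f (a + k) = f (b + k)"
    proof (induction k)
      case 0 then show ?case using eq by simp
    next
      case (Suc k)
      have "step (f (a+k)) (f (Suc (a+k)))" "step (f (b+k)) (f (Suc (b+k)))"
        using assms Suc.prems by (auto simp: reduces_in_def)
      then show ?case using Suc step_det by (metis add_Suc_right Suc_leD)
    qed
  qed
  from this[of "j - b"] have "f (a + (j - b)) = f j" using assms by simp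
  moreover have "step (f (a + (j - b))) (f (Suc (a + (j - b))))"
    using assms by (auto simp: reduces_in_def)
  ultimately show False using assms(1) abs_nostep by (metis reduces_in_def)
qed

fun code :: "lterm \<Rightarrow> nat list" where
  "code (Var n) = replicate n 0 @ [1]"
| "code (Lam s) = 2 # code s"
| "code (App s t) = 3 # code s @ code t"

lemma code_len: "length (code t) = tsize t"
  by (induction t) auto

lemma code_set: "set (code t) \<subseteq> {0..<4}"
  by (induction t) auto

lemma rep_eq: "replicate n (0::nat) @ Suc 0 # r = replicate m 0 @ Suc 0 # r' \<Longrightarrow> n = m \<and> r = r'"
  by (induction n arbitrary: m; case_tac m; auto)

lemma rep_ne2 [simp]: "replicate n (0::nat) @ Suc 0 # r \<noteq> 2 # z"
  by (cases n) auto

lemma rep_ne3 [simp]: "replicate n (0::nat) @ Suc 0 # r \<noteq> 3 # z"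
  by (cases n) auto

lemma rep_ne2' [simp]: "2 # z \<noteq> replicate n (0::nat) @ Suc 0 # r"
  by (cases n) auto

lemma rep_ne3' [simp]: "3 # z \<noteq> replicate n (0::nat) @ Suc 0 # r"
  by (cases n) auto

lemma code_prefix: "code s @ r = code t @ r' \<Longrightarrow> s = t \<and> r = r'"
proof (induction s arbitrary: t r r')
  case (Var n)
  then show ?case
    by (cases t) (auto dest: rep_eq)
next
  case (Lam s)
  then show ?case
    by (cases t) auto
next
  case (App a b)
  show ?case
  proof (cases t)
    case (Var m) then show ?thesis using App.prems by auto
  next
    case (Lam x) then show ?thesis using App.prems by auto
  next
    case (App c d)
    then have "code a @ (code b @ r) = code c @ (code d @ r')" using App.prems by simp
    then have "a = c" "code b @ r = code d @ r'" using App.IH(1) by blast+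
    then show ?thesis using App.IH(2) \<open>t = _\<close> by blast
  qed
qed

lemma code_inj: "inj code"
  by (rule injI) (use code_prefix[where r="[]" and r'="[]"] in auto)

lemma geo: "(\<Sum>i\<le>m. (4::nat)^i) \<le> 4^(Suc m)"
  by (induction m) auto

lemma card_terms: "finite {t. tsize t \<le> m} \<and> card {t. tsize t \<le> m} \<le> 4 ^ Suc m"
proof -
  let ?L = "{xs. set xs \<subseteq> {0..<4::nat} \<and> length xs \<le> m}"
  have sub: "code ` {t. tsize t \<le> m} \<subseteq> ?L" using code_len code_set by auto
  have fin: "finite ?L" by (rule finite_lists_length_le) simp
  have cl: "card ?L = (\<Sum>i\<le>m. 4^i)" by (subst card_lists_length_le) auto
  have f: "finite {t. tsize t \<le> m}"
    using finite_imageD[OF finite_subset[OF sub fin]] code_inj by (meson inj_on_subset subset_UNIV)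
  have "card {t. tsize t \<le> m} = card (code ` {t. tsize t \<le> m})"
    using code_inj by (simp add: card_image inj_on_subset)
  also have "\<dots> \<le> card ?L" by (rule card_mono[OF fin sub])
  finally show ?thesis using f cl geo by (metis order_trans)
qed

theorem theorem21:
  shows "\<exists>c::real. \<forall>s j f. reduces_in s j f \<and> j \<ge> 1 \<longrightarrow>
           log 2 (real (Time s)) \<le> c * real (Space s)"
proof (intro exI allI impI)
  fix s j f assume H: "reduces_in s j f \<and> j \<ge> 1"
  then have r: "reduces_in s j f" and j1: "j \<ge> 1" by auto
  define m where "m = (MAX i\<in>{..j}. tsize (f i))"
  have T: "Time s = j" using Time_eq[OF r] .
  have S: "Space s = m" using Space_eq[OF r] m_def by simp
  have inj: "inj_on f {..j}"
  proof (rule inj_onI)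
    fix a b assume "a \<in> {..j}" "b \<in> {..j}" "f a = f b"
    then show "a = b" using distinct_seq[OF r] by (metis atMost_iff linorder_neqE_nat)
  qed
  have sub: "f ` {..j} \<subseteq> {t. tsize t \<le> m}"
    unfolding m_def by auto
  have "Suc j = card (f ` {..j})" using inj by (simp add: card_image)
  also have "\<dots> \<le> card {t. tsize t \<le> m}" using card_mono[OF _ sub] card_terms by blast
  also have "\<dots> \<le> 4 ^ Suc m" using card_terms by blast
  finally have jb: "j < 4 ^ Suc m" by simp
  have m1: "m \<ge> 1"
  proof -
    have "tsize (f 0) \<ge> 1" by (cases "f 0") auto
    moreover have "tsize (f 0) \<le> m" using sub by auto
    ultimately show ?thesis by simp
  qed
  have "j < 2 ^ (2 * Suc m)" using jb by (simp add: power_mult)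
  then have "real j < (2::real) ^ (2 * Suc m)"
    by (metis of_nat_less_iff of_nat_numeral of_nat_power)
  then have "log 2 (real j) < real (2 * Suc m)"
    using j1 by (intro log_of_power_less) simp_all
  then have "log 2 (real j) \<le> 2 * real (Suc m)" by simp
  also have "\<dots> \<le> 4 * real m" using m1 by simp
  finally show "log 2 (real (Time s)) \<le> 4 * real (Space s)" using T S by simp
qed

end
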